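(* Let $b\ge 1$ be an integer and let $c\in\mathbb{R}$ be a fixed critical value (depending only on $b$, not on $l$). For each integer $l\ge 1$ let $D_1(l),\dots,D_b(l)$ be real random variables on a probability space with probability measure $\mathbb{P}$, where $\mathbb{P}$ is the distribution under which the null hypothesis $H_{0j}$ for the fixed candidate feature $f_j$ holds. Assume: (A1) almost surely, $D_i(l+1)\le D_i(l)$ for all $i\in\{1,\dots,b\}$ and all $l\ge 1$; (A2) almost surely, for every $l$, all $D_i(l)$ are nonzero and the absolute values $|D_1(l)|,\dots,|D_b(l)|$ are pairwise distinct. Let $T^+(l)=\sum_{i=1}^b R_i(l)\,\mathbf{1}\{D_i(l)>0\}$, where $R_i(l)$ is the rank of $|D_i(l)|$ among $\{|D_1(l)|,\dots,|D_b(l)|\}$ (rank $1$ for the smallest). Define the Type I error $\alpha_j(l)=\mathbb{P}\big(T^+(l)\ge c\big)$. Then for every $l\ge 1$, \[\alpha_j(l+1)\le \alpha_j(l).\]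
   Context: Setting: a response $Y$ and candidate features $f_1,\dots,f_p$; the data are augmented with $l$ synthetic noise features $\varepsilon_1,\dots,\varepsilon_l$ drawn i.i.d. from a fixed distribution. For bootstrap replicate $i=1,\dots,b$, $I^{(i)}_j(l)$ is the importance score of $f_j$ and $I^{(i)}(\varepsilon_k;l)$ that of the $k$-th noise feature when $l$ noise features are included; $M^{(i)}(l)=\max_{1\le k\le l} I^{(i)}(\varepsilon_k;l)$ and $D_i(l)=I^{(i)}_j(l)-M^{(i)}(l)$. $T^+(l)$ is the one-sided Wilcoxon signed-rank statistic computed from $\{D_i(l)\}_{i=1}^b$, and the test rejects $H_{0j}: Y\perp\!\!\!\perp f_j$ when $T^+(l)\ge c$, with $c=c_\alpha(b)$ the Wilcoxon critical value at level $\alpha$. *)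

theory Defs
  imports "HOL-Probability.Probability"
begin

definition abs_rank :: "nat \<Rightarrow> (nat \<Rightarrow> real) \<Rightarrow> nat \<Rightarrow> nat" where
  "abs_rank b d i = card {k \<in> {1..b}. \<bar>d k\<bar> \<le> \<bar>d i\<bar>}"

definition wilcoxon_Tplus :: "nat \<Rightarrow> (nat \<Rightarrow> real) \<Rightarrow> real" where
  "wilcoxon_Tplus b d = (\<Sum>i=1..b. real (abs_rank b d i) * (if d i > 0 then 1 else 0))"

end

theory Submission
  imports Defs
begin

definition gind :: "(nat \<Rightarrow> real) \<Rightarrow> nat \<Rightarrow> nat \<Rightarrow> real" where
  "gind d i k = (if 0 < d i \<and> \<bar>d k\<bar> \<le> \<bar>d i\<bar> then 1 else 0)"

lemma tplus_sum:
  "wilcoxon_Tplus b d = (\<Sum>i=1..b. \<Sum>k=1..b. gind d i k)"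
  unfolding wilcoxon_Tplus_def abs_rank_def gind_def
proof (rule sum.cong[OF refl])
  fix i
  have "real (card {k \<in> {1..b}. \<bar>d k\<bar> \<le> \<bar>d i\<bar>}) = (\<Sum>k\<in>{k \<in> {1..b}. \<bar>d k\<bar> \<le> \<bar>d i\<bar>}. 1)"
    by simp
  also have "\<dots> = (\<Sum>k=1..b. if \<bar>d k\<bar> \<le> \<bar>d i\<bar> then 1 else 0)"
    by (rule sum.inter_filter) simp
  finally show "real (card {k \<in> {1..b}. \<bar>d k\<bar> \<le> \<bar>d i\<bar>}) * (if 0 < d i then 1 else 0)
      = (\<Sum>k=1..b. if 0 < d i \<and> \<bar>d k\<bar> \<le> \<bar>d i\<bar> then 1 else 0)"
    by (auto simp: sum_distrib_right intro!: sum.cong)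
qed

definition pind :: "(nat \<Rightarrow> real) \<Rightarrow> nat \<Rightarrow> nat \<Rightarrow> real" where
  "pind d i k = (if 0 < d i + d k then 1 else 0)"

definition sind :: "(nat \<Rightarrow> real) \<Rightarrow> nat \<Rightarrow> real" where
  "sind d i = (if 0 < d i then 1 else 0)"

lemma tplus_walsh:
  assumes nz: "\<forall>i\<in>{1..b}. d i \<noteq> 0"
    and dist: "\<forall>i\<in>{1..b}. \<forall>k\<in>{1..b}. i \<noteq> k \<longrightarrow> \<bar>d i\<bar> \<noteq> \<bar>d k\<bar>"
  shows "2 * wilcoxon_Tplus b d = (\<Sum>i=1..b. \<Sum>k=1..b. pind d i k) + (\<Sum>i=1..b. sind d i)"
proof -
  have pt: "gind d i k + gind d k i = pind d i k + (if i = k then sind d i else 0)"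
    if "i \<in> {1..b}" "k \<in> {1..b}" for i k
  proof (cases "i = k")
    case True then show ?thesis by (simp add: gind_def pind_def sind_def)
  next
    case False
    then have "\<bar>d i\<bar> \<noteq> \<bar>d k\<bar>" "d i \<noteq> 0" "d k \<noteq> 0" using dist nz that by auto
    then show ?thesis using False unfolding gind_def pind_def sind_def by (smt (verit))
  qed
  have "2 * wilcoxon_Tplus b d = (\<Sum>i=1..b. \<Sum>k=1..b. gind d i k) + (\<Sum>i=1..b. \<Sum>k=1..b. gind d k i)"
    by (simp add: tplus_sum sum.swap[of "\<lambda>i k. gind d k i"])
  also have "\<dots> = (\<Sum>i=1..b. \<Sum>k=1..b. gind d i k + gind d k i)"
    by (simp add: sum.distrib)
  also have "\<dots> = (\<Sum>i=1..b. \<Sum>k=1..b. pind d i k + (if i = k then sind d i else 0))"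
    using pt by (intro sum.cong refl) auto
  also have "\<dots> = (\<Sum>i=1..b. (\<Sum>k=1..b. pind d i k) + sind d i)"
    by (intro sum.cong refl) (simp add: sum.distrib sum.delta)
  also have "\<dots> = (\<Sum>i=1..b. \<Sum>k=1..b. pind d i k) + (\<Sum>i=1..b. sind d i)"
    by (simp add: sum.distrib)
  finally show ?thesis .
qed

lemma tplus_mono:
  assumes "\<forall>i\<in>{1..b}. d i \<noteq> 0"
    and "\<forall>i\<in>{1..b}. \<forall>k\<in>{1..b}. i \<noteq> k \<longrightarrow> \<bar>d i\<bar> \<noteq> \<bar>d k\<bar>"
    and "\<forall>i\<in>{1..b}. e i \<noteq> 0"
    and "\<forall>i\<in>{1..b}. \<forall>k\<in>{1..b}. i \<noteq> k \<longrightarrow> \<bar>e i\<bar> \<noteq> \<bar>e k\<bar>"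
    and le: "\<forall>i\<in>{1..b}. e i \<le> d i"
  shows "wilcoxon_Tplus b e \<le> wilcoxon_Tplus b d"
proof -
  have "(\<Sum>i=1..b. \<Sum>k=1..b. pind e i k) \<le> (\<Sum>i=1..b. \<Sum>k=1..b. pind d i k)"
  proof (intro sum_mono)
    fix i k assume "i \<in> {1..b}" "k \<in> {1..b}"
    then have "e i \<le> d i" "e k \<le> d k" using le by auto
    then show "pind e i k \<le> pind d i k" by (simp add: pind_def)
  qed
  moreover have "(\<Sum>i=1..b. sind e i) \<le> (\<Sum>i=1..b. sind d i)"
    using le by (intro sum_mono) (fastforce simp: sind_def)
  ultimately have "2 * wilcoxon_Tplus b e \<le> 2 * wilcoxon_Tplus b d"
    using tplus_walsh[OF assms(1,2)] tplus_walsh[OF assms(3,4)] by linarith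
  then show ?thesis by simp
qed

theorem proposition5p1:
  fixes M :: "'a measure" and b :: nat and c :: real
    and D :: "nat \<Rightarrow> nat \<Rightarrow> 'a \<Rightarrow> real"
  assumes "prob_space M"
    and "b \<ge> 1"
    and meas: "\<And>l i. l \<ge> 1 \<Longrightarrow> i \<in> {1..b} \<Longrightarrow> D l i \<in> borel_measurable M"
    and A1: "AE \<omega> in M. \<forall>l\<ge>1. \<forall>i\<in>{1..b}. D (Suc l) i \<omega> \<le> D l i \<omega>"
    and A2: "AE \<omega> in M. \<forall>l\<ge>1. (\<forall>i\<in>{1..b}. D l i \<omega> \<noteq> 0) \<and>
                 (\<forall>i\<in>{1..b}. \<forall>k\<in>{1..b}. i \<noteq> k \<longrightarrow> \<bar>D l i \<omega>\<bar> \<noteq> \<bar>D l k \<omega>\<bar>)"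
    and "l \<ge> 1"
  shows "measure M {\<omega> \<in> space M. wilcoxon_Tplus b (\<lambda>i. D (Suc l) i \<omega>) \<ge> c}
         \<le> measure M {\<omega> \<in> space M. wilcoxon_Tplus b (\<lambda>i. D l i \<omega>) \<ge> c}"
proof -
  interpret prob_space M by fact
  have mf: "(\<lambda>\<omega>. wilcoxon_Tplus b (\<lambda>i. D l i \<omega>)) \<in> borel_measurable M"
  proof -
    have "(\<lambda>\<omega>. \<Sum>i=1..b. \<Sum>k=1..b. gind (\<lambda>i. D l i \<omega>) i k) \<in> borel_measurable M"
      unfolding gind_def
    proof (intro borel_measurable_sum)
      fix i k assume "i \<in> {1..b}" "k \<in> {1..b}"
      then have [measurable]: "D l i \<in> borel_measurable M" "D l k \<in> borel_measurable M"
        using meas \<open>l \<ge> 1\<close> by auto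
      show "(\<lambda>\<omega>. if 0 < D l i \<omega> \<and> \<bar>D l k \<omega>\<bar> \<le> \<bar>D l i \<omega>\<bar> then 1 else 0 :: real) \<in> borel_measurable M"
        by measurable
    qed
    then show ?thesis by (simp add: tplus_sum)
  qed
  have B: "{\<omega> \<in> space M. wilcoxon_Tplus b (\<lambda>i. D l i \<omega>) \<ge> c} \<in> sets M"
    using mf by measurable
  show ?thesis
  proof (rule finite_measure_mono_AE[OF _ B])
    show "AE x in M. x \<in> {\<omega> \<in> space M. c \<le> wilcoxon_Tplus b (\<lambda>i. D (Suc l) i \<omega>)} \<longrightarrow>
        x \<in> {\<omega> \<in> space M. c \<le> wilcoxon_Tplus b (\<lambda>i. D l i \<omega>)}"
      using A1 A2
    proof eventually_elim
      case (elim x)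
      have "wilcoxon_Tplus b (\<lambda>i. D (Suc l) i x) \<le> wilcoxon_Tplus b (\<lambda>i. D l i x)"
        apply (rule tplus_mono)
        using elim(2)[rule_format, of l] elim(2)[rule_format, of "Suc l"] elim(1) \<open>l \<ge> 1\<close>
        by auto
      then show ?case by auto
    qed
  qed
qed

end
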